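(* Let $G$ be of type $A_{N}$ with simple roots identified with $\Pi=\{1,\dots,N\}$. Let $J'\subseteq J\subseteq\Pi$ with $J\subseteq[a,b]$ for some $a,b\in\Pi$, and let $A\subseteq\Pi\setminus[a-1,b+1]$. Then \[ \gamma_{J/J'}=\gamma_{J\sqcup A/J'\sqcup A}\in Q_{m,W},\qquad Y_{J/J'}=Y_{J\sqcup A/J'\sqcup A}\in Q_{t,W}. \]
   Context: General notation. $W$ is the Weyl group, $\Sigma^\pm$ are the positive and negative roots, and $\ell$ is the length function. For $K\subseteq\Pi$: - $W_K$ is the parabolic subgroup with longest element $w_K$, - $W^K$ is the set of minimal length representatives of $W/W_K$, - $\Sigma^-_K$ is the set of negative roots $\alpha$ with $s_\alpha\in W_K$. For $K'\subseteq K$ set $w_{K/K'}=w_Kw_{K'}$. Multiplicative side. Take $R=\mathbb Z[t,t^{-1},(t+t^{-1})^{-1}]$. $Q_{m,W}$ is the twisted group algebra (basis $\delta^m_w$, product $(p\delta_w)(p'\delta_{w'})=p\,w(p')\delta_{ww'}$) over $Q_m=R[[X^*(T)]]_{F_m}[1/x_\alpha:\alpha>0]$, with $F_m(x,y)=x+y-xy$ and $x_\lambda=1-e^{-\lambda}$. Let \[ \tau_i=\frac{t^{-1}-t}{1-e^{-\alpha_i}}+\frac{t-t^{-1}e^{-\alpha_i}}{1-e^{-\alpha_i}}\delta^m_{s_i}, \] let $\tau_v$ be the product over a reduced word, and $t_v=t^{\ell(v)}$. Define \[ \gamma_{K/K'}:=\sum_{v\in W_K\cap W^{K'}}t_{w_{K/K'}}t_v^{-1}\tau_v.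 \] Hyperbolic side. $Q_{t,W}$ is the analogous twisted group algebra for the hyperbolic formal group law $F_t(x,y)=\frac{x+y-xy}{1-\mu^{-2}xy}$, $\mu=t+t^{-1}$. Define \[ x_{K/K'}=\prod_{\alpha\in\Sigma^-_K\setminus\Sigma^-_{K'}}x_\alpha,\qquad Y_{K/K'}:=\Bigl(\sum_{w\in W_{K/K'}}\delta^t_w\Bigr)\frac{1}{x_{K/K'}}, \] where $W_{K/K'}$ is any set of left coset representatives of $W_K/W_{K'}$ (the result is independent of this choice). *)

theory Defs
  imports Main "HOL-Combinatorics.Permutations"
begin

text \<open>Type A_N: the Weyl group W is the symmetric group on I = {1..N+1},
  realised as permutations nat => nat of {1..N+1}; the simple root alpha_i
  (i in Pi = {1..N}) is eps_i - eps_(i+1), with simple reflection s_i = (i i+1).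
  A root eps_i - eps_j (i, j in I, i /= j) is encoded by the pair (i,j);
  it is negative iff i > j, and its reflection is the transposition (i j).\<close>

definition Iset :: "nat \<Rightarrow> nat set" where
  "Iset N = {1..Suc N}"

definition Wgrp :: "nat \<Rightarrow> (nat \<Rightarrow> nat) set" where
  "Wgrp N = {p. p permutes Iset N}"

definition sref :: "nat \<Rightarrow> nat \<Rightarrow> nat" where
  "sref i = transpose i (Suc i)"

definition word_prod :: "nat list \<Rightarrow> nat \<Rightarrow> nat" where
  "word_prod ws = foldr (\<lambda>i acc. sref i \<circ> acc) ws id"

definition coxlen :: "nat \<Rightarrow> (nat \<Rightarrow> nat) \<Rightarrow> nat" where
  "coxlen N w = (LEAST n. \<exists>ws. length ws = n \<and> set ws \<subseteq> {1..N} \<and> word_prod ws = w)"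

definition reduced_word :: "nat \<Rightarrow> (nat \<Rightarrow> nat) \<Rightarrow> nat list \<Rightarrow> bool" where
  "reduced_word N w ws \<longleftrightarrow> set ws \<subseteq> {1..N} \<and> word_prod ws = w \<and> length ws = coxlen N w"

definition parab :: "nat set \<Rightarrow> (nat \<Rightarrow> nat) set" where
  "parab K = {word_prod ws | ws. set ws \<subseteq> K}"

definition longest :: "nat \<Rightarrow> nat set \<Rightarrow> nat \<Rightarrow> nat" where
  "longest N K = (THE w. w \<in> parab K \<and> (\<forall>u\<in>parab K. coxlen N u \<le> coxlen N w))"

definition minreps :: "nat \<Rightarrow> nat set \<Rightarrow> (nat \<Rightarrow> nat) set" where
  "minreps N K = {w \<in> Wgrp N. \<forall>u\<in>parab K. coxlen N w \<le> coxlen N (w \<circ> u)}"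

definition negroots :: "nat \<Rightarrow> nat set \<Rightarrow> (nat \<times> nat) set" where
  "negroots N K = {(i,j). 1 \<le> j \<and> j < i \<and> i \<le> Suc N \<and> transpose i j \<in> parab K}"

text \<open>An element sum_w p_w delta_w is the function w |-> p_w (zero outside W).
  Product: (p delta_w)(p' delta_w') = p w(p') delta_(ww').\<close>

definition tga_mult :: "nat \<Rightarrow> ((nat \<Rightarrow> nat) \<Rightarrow> 'q \<Rightarrow> 'q) \<Rightarrow>
    ((nat \<Rightarrow> nat) \<Rightarrow> 'q::comm_ring_1) \<Rightarrow> ((nat \<Rightarrow> nat) \<Rightarrow> 'q) \<Rightarrow> (nat \<Rightarrow> nat) \<Rightarrow> 'q" where
  "tga_mult N act f g = (\<lambda>u. if u \<in> Wgrp N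
      then (\<Sum>w\<in>Wgrp N. f w * act w (g (inv w \<circ> u))) else 0)"

definition tga_delta :: "(nat \<Rightarrow> nat) \<Rightarrow> (nat \<Rightarrow> nat) \<Rightarrow> 'q::comm_ring_1" where
  "tga_delta w = (\<lambda>u. if u = w then 1 else 0)"

definition tga_one :: "(nat \<Rightarrow> nat) \<Rightarrow> 'q::comm_ring_1" where
  "tga_one = tga_delta id"

text \<open>Abstract data of a coefficient field with the properties of (the fraction field
  of) Q_m resp. Q_t which are relevant: a W-action by ring automorphisms fixing
  the base ring R (in particular t), and the elements attached to roots.
  On the multiplicative side, em i j stands for e^(-(eps_i - eps_j)), so that
  x_(eps_i - eps_j) = 1 - em i j.  On the hyperbolic side, xh i j stands for
  x_(eps_i - eps_j) in the hyperbolic formal group ring.\<close>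

definition W_action :: "nat \<Rightarrow> ((nat \<Rightarrow> nat) \<Rightarrow> 'q \<Rightarrow> 'q) \<Rightarrow> 'q::field \<Rightarrow> bool" where
  "W_action N act t \<longleftrightarrow>
     act id = id \<and>
     (\<forall>w\<in>Wgrp N. \<forall>v\<in>Wgrp N. act (w \<circ> v) = act w \<circ> act v) \<and>
     (\<forall>w\<in>Wgrp N. \<forall>a b. act w (a + b) = act w a + act w b \<and> act w (a * b) = act w a * act w b) \<and>
     (\<forall>w\<in>Wgrp N. act w 1 = 1 \<and> act w t = t) \<and>
     t \<noteq> 0 \<and> t + inverse t \<noteq> 0"

definition mult_setting :: "nat \<Rightarrow> ((nat \<Rightarrow> nat) \<Rightarrow> 'q \<Rightarrow> 'q) \<Rightarrow> (nat \<Rightarrow> nat \<Rightarrow> 'q) \<Rightarrow> 'q::field \<Rightarrow> bool" where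
  "mult_setting N act em t \<longleftrightarrow> W_action N act t \<and>
     (\<forall>w\<in>Wgrp N. \<forall>i\<in>Iset N. \<forall>j\<in>Iset N. act w (em i j) = em (w i) (w j)) \<and>
     (\<forall>i\<in>Iset N. em i i = 1) \<and>
     (\<forall>i\<in>Iset N. \<forall>j\<in>Iset N. \<forall>k\<in>Iset N. em i j * em j k = em i k) \<and>
     (\<forall>i\<in>Iset N. \<forall>j\<in>Iset N. i \<noteq> j \<longrightarrow> em i j \<noteq> 1)"

definition hyp_setting :: "nat \<Rightarrow> ((nat \<Rightarrow> nat) \<Rightarrow> 'q \<Rightarrow> 'q) \<Rightarrow> (nat \<Rightarrow> nat \<Rightarrow> 'q) \<Rightarrow> 'q::field \<Rightarrow> bool" where
  "hyp_setting N act xh t \<longleftrightarrow> W_action N act t \<and>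
     (\<forall>w\<in>Wgrp N. \<forall>i\<in>Iset N. \<forall>j\<in>Iset N. act w (xh i j) = xh (w i) (w j)) \<and>
     (\<forall>i\<in>Iset N. xh i i = 0) \<and>
     (\<forall>i\<in>Iset N. \<forall>j\<in>Iset N. \<forall>k\<in>Iset N.
        xh i k * (1 - xh i j * xh j k / (t + inverse t)^2) = xh i j + xh j k - xh i j * xh j k) \<and>
     (\<forall>i\<in>Iset N. \<forall>j\<in>Iset N. i \<noteq> j \<longrightarrow> xh i j \<noteq> 0)"

definition tau :: "(nat \<Rightarrow> nat \<Rightarrow> 'q::field) \<Rightarrow> 'q \<Rightarrow> nat \<Rightarrow> (nat \<Rightarrow> nat) \<Rightarrow> 'q" where
  "tau em t i = (\<lambda>u.
      if u = id then (inverse t - t) / (1 - em i (Suc i))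
      else if u = sref i then (t - inverse t * em i (Suc i)) / (1 - em i (Suc i))
      else 0)"

definition tau_elt :: "nat \<Rightarrow> ((nat \<Rightarrow> nat) \<Rightarrow> 'q \<Rightarrow> 'q) \<Rightarrow> (nat \<Rightarrow> nat \<Rightarrow> 'q::field) \<Rightarrow> 'q
    \<Rightarrow> (nat \<Rightarrow> nat) \<Rightarrow> (nat \<Rightarrow> nat) \<Rightarrow> 'q" where
  "tau_elt N act em t v =
     foldr (\<lambda>i acc. tga_mult N act (tau em t i) acc) (SOME ws. reduced_word N v ws) tga_one"

definition gamma :: "nat \<Rightarrow> ((nat \<Rightarrow> nat) \<Rightarrow> 'q \<Rightarrow> 'q) \<Rightarrow> (nat \<Rightarrow> nat \<Rightarrow> 'q::field) \<Rightarrow> 'q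
    \<Rightarrow> nat set \<Rightarrow> nat set \<Rightarrow> (nat \<Rightarrow> nat) \<Rightarrow> 'q" where
  "gamma N act em t K K' = (\<lambda>u. \<Sum>v\<in>parab K \<inter> minreps N K'.
      t ^ coxlen N (longest N K \<circ> longest N K') * inverse (t ^ coxlen N v) * tau_elt N act em t v u)"

definition xquot :: "nat \<Rightarrow> (nat \<Rightarrow> nat \<Rightarrow> 'q::field) \<Rightarrow> nat set \<Rightarrow> nat set \<Rightarrow> 'q" where
  "xquot N xh K K' = (\<Prod>(i,j)\<in>negroots N K - negroots N K'. xh i j)"

text \<open>Left coset representatives of W_K/W_K' are taken to be W_K \<inter> W^K'
  (the result does not depend on this choice).\<close>
definition Yop :: "nat \<Rightarrow> ((nat \<Rightarrow> nat) \<Rightarrow> 'q \<Rightarrow> 'q) \<Rightarrow> (nat \<Rightarrow> nat \<Rightarrow> 'q::field)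
    \<Rightarrow> nat set \<Rightarrow> nat set \<Rightarrow> (nat \<Rightarrow> nat) \<Rightarrow> 'q" where
  "Yop N act xh K K' = tga_mult N act
      (\<lambda>u. \<Sum>w\<in>parab K \<inter> minreps N K'. tga_delta w u)
      (\<lambda>u. inverse (xquot N xh K K') * tga_one u)"

end

theory Submission
  imports Defs
begin

definition invs :: "nat \<Rightarrow> (nat \<Rightarrow> nat) \<Rightarrow> (nat \<times> nat) set" where
  "invs N p = {(i,j). i \<in> Iset N \<and> j \<in> Iset N \<and> i < j \<and> p j < p i}"

definition ninv :: "nat \<Rightarrow> (nat \<Rightarrow> nat) \<Rightarrow> nat" where "ninv N p = card (invs N p)"

definition cutp :: "nat \<Rightarrow> (nat \<Rightarrow> nat) \<Rightarrow> bool" where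
  "cutp k p \<longleftrightarrow> (\<forall>x. (p x \<le> k) = (x \<le> k))"

lemma finite_invs: "finite (invs N p)"
  unfolding invs_def Iset_def
  by (rule finite_subset[of _ "{1..Suc N} \<times> {1..Suc N}"]) auto

lemma word_prod_Nil[simp]: "word_prod [] = id" by (simp add: word_prod_def)
lemma word_prod_Cons[simp]: "word_prod (i#ws) = sref i \<circ> word_prod ws" by (simp add: word_prod_def)
lemma word_prod_append: "word_prod (xs @ ys) = word_prod xs \<circ> word_prod ys"
  by (induction xs) (auto simp: comp_assoc)

lemma sref_permutes: "i \<in> {1..N} \<Longrightarrow> sref i permutes Iset N"
  unfolding sref_def Iset_def by (rule permutes_swap_id) auto

lemma word_permutes: "set ws \<subseteq> {1..N} \<Longrightarrow> word_prod ws permutes Iset N"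
proof (induction ws)
  case Nil show ?case unfolding word_prod_Nil by (rule permutes_id)
next
  case (Cons a ws)
  have "word_prod ws permutes Iset N" using Cons by auto
  moreover have "sref a permutes Iset N" using Cons by (auto intro: sref_permutes)
  ultimately show ?case unfolding word_prod_Cons by (rule permutes_compose)
qed

lemma sref_cutp: "i \<noteq> k \<Longrightarrow> cutp k (sref i)"
  unfolding cutp_def sref_def transpose_def by auto

lemma cutp_comp: "cutp k p \<Longrightarrow> cutp k q \<Longrightarrow> cutp k (p \<circ> q)"
  by (simp add: cutp_def)

lemma word_cutp: "k \<notin> set ws \<Longrightarrow> cutp k (word_prod ws)"
proof (induction ws)
  case Nil show ?case by (simp add: cutp_def)
next
  case (Cons i ws)
  hence "i \<noteq> k" "cutp k (word_prod ws)" by auto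
  thus ?case unfolding word_prod_Cons by (intro cutp_comp sref_cutp)
qed

lemma sref_sref: "sref k \<circ> sref k = id"
  by (auto simp: sref_def fun_eq_iff)

lemma inv_step:
  assumes p: "p permutes Iset N" and k: "k \<in> {1..N}"
  shows "ninv N (p \<circ> sref k) + (if p (Suc k) < p k then 1 else 0)
       = ninv N p + (if p k < p (Suc k) then 1 else 0)"
proof -
  let ?s = "sref k"
  let ?D = "(k, Suc k)"
  define f where "f = (\<lambda>(i::nat,j::nat). (?s i, ?s j))"
  have ss: "\<And>i. ?s (?s i) = i" using sref_sref by (metis comp_apply id_apply)
  have mono: "\<And>i j. i < j \<Longrightarrow> (i,j) \<noteq> ?D \<Longrightarrow> ?s i < ?s j"
    unfolding sref_def transpose_def by auto
  have sI: "\<And>i. (?s i \<in> Iset N) = (i \<in> Iset N)"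
    using k unfolding sref_def transpose_def Iset_def by auto
  have fD: "\<And>i j. i < j \<Longrightarrow> f (i,j) \<noteq> ?D"
    unfolding f_def sref_def transpose_def by auto
  have into: "\<And>q. f ` (invs N q - {?D}) \<subseteq> invs N (q \<circ> ?s) - {?D}"
  proof
    fix q x assume x: "x \<in> f ` (invs N q - {?D})"
    then obtain i j where ij: "(i,j) \<in> invs N q" "(i,j) \<noteq> ?D" "x = f (i,j)" by auto
    have "i < j" using ij unfolding invs_def by auto
    have "?s i < ?s j" using mono ij(2) \<open>i<j\<close> by auto
    have "x \<noteq> ?D" using fD[OF \<open>i<j\<close>] ij(3) by simp
    moreover have "x \<in> invs N (q \<circ> ?s)"
      using ij \<open>?s i < ?s j\<close> sI ss unfolding invs_def f_def by auto
    ultimately show "x \<in> invs N (q \<circ> ?s) - {?D}" by simp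
  qed
  have bij: "bij_betw f (invs N p - {?D}) (invs N (p \<circ> ?s) - {?D})"
  proof (rule bij_betw_byWitness[where f'=f])
    show "\<forall>a\<in>invs N p - {?D}. f (f a) = a" by (auto simp: f_def ss)
    show "\<forall>a\<in>invs N (p \<circ> ?s) - {?D}. f (f a) = a" by (auto simp: f_def ss)
    show "f ` (invs N p - {?D}) \<subseteq> invs N (p \<circ> ?s) - {?D}" by (rule into)
    have "f ` (invs N (p \<circ> ?s) - {?D}) \<subseteq> invs N (p \<circ> ?s \<circ> ?s) - {?D}" by (rule into)
    thus "f ` (invs N (p \<circ> ?s) - {?D}) \<subseteq> invs N p - {?D}"
      by (simp add: comp_assoc sref_sref)
  qed
  hence cd: "card (invs N p - {?D}) = card (invs N (p \<circ> ?s) - {?D})" by (rule bij_betw_same_card)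
  have cq: "\<And>q. card (invs N q) = card (invs N q - {?D}) + (if ?D \<in> invs N q then 1 else 0)"
  proof -
    fix q
    show "card (invs N q) = card (invs N q - {?D}) + (if ?D \<in> invs N q then 1 else 0)"
    proof (cases "?D \<in> invs N q")
      case True
      from card_Suc_Diff1[OF finite_invs True] show ?thesis using True by simp
    next
      case False thus ?thesis by simp
    qed
  qed
  have kI: "k \<in> Iset N" "Suc k \<in> Iset N" using k by (auto simp: Iset_def)
  have d1: "(?D \<in> invs N p) = (p (Suc k) < p k)" using kI by (simp add: invs_def)
  have d2: "(?D \<in> invs N (p \<circ> ?s)) = (p k < p (Suc k))" using kI
    by (simp add: invs_def sref_def)
  show ?thesis unfolding ninv_def using cq[of p] cq[of "p \<circ> ?s"] cd d1 d2 by auto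
qed

lemma perm_Iset: "p permutes Iset N \<Longrightarrow> i \<in> Iset N \<Longrightarrow> p i \<in> Iset N"
  by (simp add: permutes_in_image)

lemma descent:
  assumes p: "p permutes Iset N" and ne: "p \<noteq> id"
  shows "\<exists>k\<in>{1..N}. p (Suc k) < p k"
proof (rule ccontr)
  assume "\<not> ?thesis"
  hence no: "\<And>k. k \<in> {1..N} \<Longrightarrow> p k < p (Suc k)"
    using permutes_inj[OF p] by (metis injD linorder_neqE_nat n_not_Suc_n)
  have up: "\<And>i. 1 \<le> i \<Longrightarrow> i \<le> Suc N \<longrightarrow> i \<le> p i"
  proof -
    fix i :: nat assume "1 \<le> i"
    thus "i \<le> Suc N \<longrightarrow> i \<le> p i"
    proof (induction i rule: dec_induct)
      case base
      show ?case using perm_Iset[OF p, of 1] by (auto simp: Iset_def)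
    next
      case (step n)
      thus ?case using no[of n] by auto
    qed
  qed
  have down: "\<And>m. m \<le> N \<longrightarrow> p (Suc N - m) \<le> Suc N - m"
  proof -
    fix m show "m \<le> N \<longrightarrow> p (Suc N - m) \<le> Suc N - m"
    proof (induction m)
      case 0
      show ?case using perm_Iset[OF p, of "Suc N"] by (auto simp: Iset_def)
    next
      case (Suc m)
      show ?case
      proof
        assume m: "Suc m \<le> N"
        have e: "Suc (Suc N - Suc m) = Suc N - m" using m by auto
        have "p (Suc N - Suc m) < p (Suc (Suc N - Suc m))" using no[of "Suc N - Suc m"] m by auto
        thus "p (Suc N - Suc m) \<le> Suc N - Suc m" using Suc m e by auto
      qed
    qed
  qed
  have "\<And>i. p i = i"
  proof -
    fix i
    show "p i = i"
    proof (cases "i \<in> Iset N")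
      case True
      hence i: "1 \<le> i" "i \<le> Suc N" by (auto simp: Iset_def)
      have "p i \<le> i" using down[of "Suc N - i"] i by auto
      thus ?thesis using up[OF i(1)] i by auto
    next
      case False thus ?thesis using permutes_not_in[OF p] by auto
    qed
  qed
  thus False using ne by auto
qed

lemma ninv0: assumes p: "p permutes Iset N" and z: "ninv N p = 0" shows "p = id"
proof (rule ccontr)
  assume "p \<noteq> id"
  then obtain k where k: "k \<in> {1..N}" "p (Suc k) < p k" using descent[OF p] by auto
  hence "(k, Suc k) \<in> invs N p" by (auto simp: invs_def Iset_def)
  thus False using z finite_invs unfolding ninv_def by (metis card_0_eq empty_iff)
qed

lemma ninv_id: "ninv N id = 0"
proof -
  have "invs N id = {}" by (auto simp: invs_def)
  thus ?thesis by (simp add: ninv_def)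
qed

lemma bubble:
  "p permutes Iset N \<Longrightarrow> (\<forall>k\<in>{1..N}. k \<notin> K \<longrightarrow> cutp k p) \<Longrightarrow>
   \<exists>ws. set ws \<subseteq> K \<and> length ws = ninv N p \<and> word_prod ws = p"
proof (induction "ninv N p" arbitrary: p)
  case 0
  hence "p = id" using ninv0 by metis
  thus ?case using 0 by (intro exI[of _ "[]"]) auto
next
  case (Suc n)
  hence "p \<noteq> id" using ninv_id by (metis Zero_not_Suc)
  then obtain k where k: "k \<in> {1..N}" "p (Suc k) < p k" using descent[OF Suc.prems(1)] by auto
  have kK: "k \<in> K"
  proof (rule ccontr)
    assume "k \<notin> K"
    hence "cutp k p" using Suc.prems k by auto
    hence "p k \<le> k" "\<not> p (Suc k) \<le> k" unfolding cutp_def by auto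
    thus False using k by auto
  qed
  define q where "q = p \<circ> sref k"
  have qp: "q permutes Iset N" unfolding q_def
    using permutes_compose[OF sref_permutes[OF k(1)] Suc.prems(1)] .
  have qc: "\<forall>k'\<in>{1..N}. k' \<notin> K \<longrightarrow> cutp k' q"
    using Suc.prems(2) kK unfolding q_def by (metis cutp_comp sref_cutp)
  have "ninv N q + 1 = ninv N p" using inv_step[OF Suc.prems(1) k(1)] k(2) unfolding q_def by auto
  hence "n = ninv N q" using Suc.hyps(2) by auto
  then obtain ws where ws: "set ws \<subseteq> K" "length ws = ninv N q" "word_prod ws = q"
    using Suc.hyps(1) qp qc by blast
  have "word_prod (ws @ [k]) = p" using ws(3) unfolding word_prod_append q_def
    by (simp add: comp_assoc sref_sref)
  thus ?case using ws kK \<open>n = ninv N q\<close> Suc.hyps(2) by (intro exI[of _ "ws @ [k]"]) auto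
qed

lemma ninv_le: "set ws \<subseteq> {1..N} \<Longrightarrow> ninv N (word_prod ws) \<le> length ws"
proof (induction ws rule: rev_induct)
  case Nil show ?case unfolding word_prod_Nil ninv_id by simp
next
  case (snoc x xs)
  have "set xs \<subseteq> {1..N}" using snoc.prems by simp
  hence p: "word_prod xs permutes Iset N" by (rule word_permutes)
  have "x \<in> {1..N}" using snoc by auto
  from inv_step[OF p this] have "ninv N (word_prod xs \<circ> sref x) \<le> ninv N (word_prod xs) + 1"
    by (auto split: if_splits)
  moreover have "ninv N (word_prod xs) \<le> length xs" using snoc by simp
  ultimately have le: "ninv N (word_prod xs \<circ> sref x) \<le> length (xs @ [x])" by simp
  have e: "word_prod (xs @ [x]) = word_prod xs \<circ> sref x"
    unfolding word_prod_append word_prod_Cons word_prod_Nil by (simp only: comp_id)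
  show ?case unfolding e by (rule le)
qed

lemma coxlen_eq: assumes w: "w \<in> Wgrp N" shows "coxlen N w = ninv N w"
proof -
  have wp: "w permutes Iset N" using w by (simp add: Wgrp_def)
  obtain ws where ws: "set ws \<subseteq> {1..N}" "length ws = ninv N w" "word_prod ws = w"
    using bubble[OF wp, of "{1..N}"] by auto
  have ex: "\<exists>ws. length ws = ninv N w \<and> set ws \<subseteq> {1..N} \<and> word_prod ws = w" using ws by auto
  have le1: "coxlen N w \<le> ninv N w" unfolding coxlen_def by (rule Least_le) (rule ex)
  have "\<exists>ws. length ws = coxlen N w \<and> set ws \<subseteq> {1..N} \<and> word_prod ws = w"
    unfolding coxlen_def by (rule LeastI_ex) (use ex in blast)
  then obtain vs where vs: "length vs = coxlen N w" "set vs \<subseteq> {1..N}" "word_prod vs = w" by blast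
  have "ninv N w \<le> coxlen N w" using ninv_le[OF vs(2)] vs by simp
  thus ?thesis using le1 by simp
qed

lemma parab_char: assumes K: "K \<subseteq> {1..N}"
  shows "parab K = {p. p permutes Iset N \<and> (\<forall>k\<in>{1..N}. k \<notin> K \<longrightarrow> cutp k p)}"
proof
  show "parab K \<subseteq> {p. p permutes Iset N \<and> (\<forall>k\<in>{1..N}. k \<notin> K \<longrightarrow> cutp k p)}"
  proof
    fix p assume "p \<in> parab K"
    then obtain ws where ws: "set ws \<subseteq> K" "p = word_prod ws" by (auto simp: parab_def)
    thus "p \<in> {p. p permutes Iset N \<and> (\<forall>k\<in>{1..N}. k \<notin> K \<longrightarrow> cutp k p)}"
      using K word_permutes[of ws N] word_cutp[of _ ws] by auto
  qed
next
  show "{p. p permutes Iset N \<and> (\<forall>k\<in>{1..N}. k \<notin> K \<longrightarrow> cutp k p)} \<subseteq> parab K"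
    using bubble unfolding parab_def by fastforce
qed

lemma parab_cutp: "p \<in> parab K \<Longrightarrow> k \<notin> K \<Longrightarrow> cutp k p"
  by (auto simp: parab_def intro: word_cutp)

lemma parab_mono: "K \<subseteq> K' \<Longrightarrow> parab K \<subseteq> parab K'"
  by (auto simp: parab_def)

lemma parab_comp: "p \<in> parab K \<Longrightarrow> q \<in> parab K \<Longrightarrow> p \<circ> q \<in> parab K"
  unfolding parab_def by (auto simp: word_prod_append[symmetric]) (metis Un_subset_iff set_append)

lemma parab_id: "id \<in> parab K"
  unfolding parab_def by (auto intro: exI[of _ "[]"])

lemma parab_Wgrp: "K \<subseteq> {1..N} \<Longrightarrow> parab K \<subseteq> Wgrp N"
  by (auto simp: parab_char Wgrp_def)

lemma cutp_inv: "p permutes S \<Longrightarrow> cutp k p \<Longrightarrow> cutp k (inv p)"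
  unfolding cutp_def by (metis permutes_inverses(1))

lemma parab_inv: "K \<subseteq> {1..N} \<Longrightarrow> p \<in> parab K \<Longrightarrow> inv p \<in> parab K"
  by (auto simp: parab_char intro: permutes_inv cutp_inv)


lemma max_descent:
  assumes K: "K \<subseteq> {1..N}" and w: "w \<in> parab K"
    and mx: "\<forall>u\<in>parab K. coxlen N u \<le> coxlen N w" and k: "k \<in> K"
  shows "w (Suc k) < w k"
proof (rule ccontr)
  assume nt: "\<not> w (Suc k) < w k"
  have wp: "w permutes Iset N" using w K by (auto simp: parab_char)
  have "w k \<noteq> w (Suc k)" using permutes_inj[OF wp] by (metis injD n_not_Suc_n)
  hence lt: "w k < w (Suc k)" using nt by auto
  have kN: "k \<in> {1..N}" using k K by auto
  have "sref k \<in> parab K" using k unfolding parab_def by (auto intro!: exI[of _ "[k]"])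
  hence q: "w \<circ> sref k \<in> parab K" using w by (rule parab_comp[rotated])
  have "ninv N (w \<circ> sref k) = ninv N w + 1" using inv_step[OF wp kN] lt by auto
  moreover have "coxlen N (w \<circ> sref k) = ninv N (w \<circ> sref k)" "coxlen N w = ninv N w"
    using q w parab_Wgrp[OF K] coxlen_eq by auto
  ultimately show False using mx q by fastforce
qed

lemma card_le_val:
  assumes p: "p permutes Iset N" and i: "i \<in> Iset N"
  shows "card {j\<in>Iset N. p j \<le> p i} = p i"
proof -
  have "p ` {j\<in>Iset N. p j \<le> p i} = {1..p i}"
  proof
    show "p ` {j\<in>Iset N. p j \<le> p i} \<subseteq> {1..p i}"
    proof
      fix y assume "y \<in> p ` {j\<in>Iset N. p j \<le> p i}"
      then obtain j where j: "j \<in> Iset N" "p j \<le> p i" "y = p j" by blast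
      have "p j \<in> Iset N" using perm_Iset[OF p j(1)] .
      thus "y \<in> {1..p i}" using j by (simp add: Iset_def)
    qed
    show "{1..p i} \<subseteq> p ` {j\<in>Iset N. p j \<le> p i}"
    proof
      fix y assume y: "y \<in> {1..p i}"
      have "p i \<in> Iset N" using perm_Iset[OF p i] .
      hence "y \<in> Iset N" using y by (auto simp: Iset_def)
      hence "y \<in> p ` Iset N" using permutes_image[OF p] by simp
      then obtain j where "j \<in> Iset N" "y = p j" by auto
      thus "y \<in> p ` {j\<in>Iset N. p j \<le> p i}" using y by auto
    qed
  qed
  moreover have "inj_on p {j\<in>Iset N. p j \<le> p i}"
    by (rule inj_on_subset[OF permutes_inj[OF p]]) simp
  ultimately show ?thesis by (metis card_atLeastAtMost card_image diff_Suc_1)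
qed

lemma desc_chain:
  fixes w :: "nat \<Rightarrow> nat"
  assumes d: "\<forall>k\<in>K. w (Suc k) < w k" and xy: "x < y" and iv: "\<forall>k. x \<le> k \<and> k < y \<longrightarrow> k \<in> K"
  shows "w y < w x"
proof -
  have "Suc x \<le> y" using xy by simp
  thus ?thesis using iv
  proof (induction y rule: dec_induct)
    case base thus ?case using d by auto
  next
    case (step n)
    have "w n < w x" using step by auto
    moreover have "n \<in> K" using step by auto
    ultimately show ?case using d by force
  qed
qed

lemma sep_lt:
  assumes w: "w \<in> parab K" and k: "x \<le> k" "k < y" "k \<notin> K"
  shows "w x < w y"
proof -
  have "cutp k w" using parab_cutp[OF w k(3)] .
  hence "w x \<le> k" "\<not> w y \<le> k" using k unfolding cutp_def by auto
  thus ?thesis by auto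
qed

lemma set_char:
  assumes w: "w \<in> parab K" and d: "\<forall>k\<in>K. w (Suc k) < w k"
  shows "{j\<in>Iset N. w j \<le> w i} = {j\<in>Iset N. (j \<le> i \<and> (j = i \<or> (\<exists>k. k\<notin>K \<and> j \<le> k \<and> k < i)))
          \<or> (i < j \<and> \<not>(\<exists>k. k\<notin>K \<and> i \<le> k \<and> k < j))}"
proof -
  have "\<And>j. (w j \<le> w i) = ((j \<le> i \<and> (j = i \<or> (\<exists>k. k\<notin>K \<and> j \<le> k \<and> k < i)))
          \<or> (i < j \<and> \<not>(\<exists>k. k\<notin>K \<and> i \<le> k \<and> k < j)))"
  proof -
    fix j
    consider "j = i" | "j < i" | "i < j" by linarith
    thus "?thesis j"
    proof cases
      case 1 thus ?thesis by auto
    next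
      case 2
      show ?thesis
      proof (cases "\<exists>k. k\<notin>K \<and> j \<le> k \<and> k < i")
        case True
        then obtain k where "k\<notin>K" "j \<le> k" "k < i" by auto
        hence "w j < w i" using sep_lt[OF w] by blast
        thus ?thesis using True 2 by auto
      next
        case False
        hence "w i < w j" using desc_chain[OF d 2] by blast
        thus ?thesis using False 2 by auto
      qed
    next
      case 3
      show ?thesis
      proof (cases "\<exists>k. k\<notin>K \<and> i \<le> k \<and> k < j")
        case True
        then obtain k where "k\<notin>K" "i \<le> k" "k < j" by auto
        hence "w i < w j" using sep_lt[OF w] by blast
        thus ?thesis using True 3 by auto
      next
        case False
        hence "w j < w i" using desc_chain[OF d 3] by blast
        thus ?thesis using False 3 by auto
      qed
    qed
  qed
  thus ?thesis by auto
qed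

lemma unique_desc:
  assumes K: "K \<subseteq> {1..N}" and w: "w \<in> parab K" and w': "w' \<in> parab K"
    and d: "\<forall>k\<in>K. w (Suc k) < w k" and d': "\<forall>k\<in>K. w' (Suc k) < w' k"
  shows "w = w'"
proof
  fix i
  have wp: "w permutes Iset N" and wp': "w' permutes Iset N" using w w' K by (auto simp: parab_char)
  show "w i = w' i"
  proof (cases "i \<in> Iset N")
    case True
    have "w i = card {j\<in>Iset N. w j \<le> w i}" using card_le_val[OF wp True] by simp
    also have "\<dots> = card {j\<in>Iset N. w' j \<le> w' i}" using set_char[OF w d] set_char[OF w' d'] by simp
    also have "\<dots> = w' i" using card_le_val[OF wp' True] by simp
    finally show ?thesis .
  next
    case False thus ?thesis using permutes_not_in[OF wp] permutes_not_in[OF wp'] by simp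
  qed
qed

lemma longest_prop:
  assumes K: "K \<subseteq> {1..N}"
  shows "longest N K \<in> parab K \<and> (\<forall>u\<in>parab K. coxlen N u \<le> coxlen N (longest N K))"
proof -
  have fin: "finite (parab K)"
    using finite_subset[OF parab_Wgrp[OF K]] finite_permutations[of "Iset N"] by (simp add: Wgrp_def Iset_def)
  have ne: "parab K \<noteq> {}" using parab_id by auto
  obtain w where w: "w \<in> parab K" "\<forall>u\<in>parab K. coxlen N u \<le> coxlen N w"
  proof -
    let ?m = "Max (coxlen N ` parab K)"
    have "?m \<in> coxlen N ` parab K" using fin ne by (intro Max_in) auto
    then obtain w where "w \<in> parab K" "coxlen N w = ?m" by auto
    moreover have "\<forall>u\<in>parab K. coxlen N u \<le> ?m" using fin by auto
    ultimately show ?thesis using that by auto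
  qed
  have uq: "\<And>v. v \<in> parab K \<and> (\<forall>u\<in>parab K. coxlen N u \<le> coxlen N v) \<Longrightarrow> v = w"
  proof -
    fix v assume v: "v \<in> parab K \<and> (\<forall>u\<in>parab K. coxlen N u \<le> coxlen N v)"
    have dv: "\<forall>k\<in>K. v (Suc k) < v k" using max_descent[OF K] v by simp
    have dw: "\<forall>k\<in>K. w (Suc k) < w k" using max_descent[OF K w(1) w(2)] by simp
    show "v = w" using unique_desc[OF K _ w(1) dv dw] v by simp
  qed
  have "longest N K = w" unfolding longest_def
  proof (rule the_equality)
    show "w \<in> parab K \<and> (\<forall>u\<in>parab K. coxlen N u \<le> coxlen N w)" using w by simp
    fix v assume "v \<in> parab K \<and> (\<forall>u\<in>parab K. coxlen N u \<le> coxlen N v)"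
    thus "v = w" by (rule uq)
  qed
  thus ?thesis using w by simp
qed

lemma longest_eq:
  assumes K: "K \<subseteq> {1..N}" and w: "w \<in> parab K" and mx: "\<forall>u\<in>parab K. coxlen N u \<le> coxlen N w"
  shows "longest N K = w"
proof -
  have l: "longest N K \<in> parab K" "\<forall>u\<in>parab K. coxlen N u \<le> coxlen N (longest N K)"
    using longest_prop[OF K] by auto
  have d1: "\<forall>k\<in>K. longest N K (Suc k) < longest N K k" using max_descent[OF K l(1) l(2)] by simp
  have d2: "\<forall>k\<in>K. w (Suc k) < w k" using max_descent[OF K w mx] by simp
  show ?thesis using unique_desc[OF K l(1) w d1 d2] .
qed

lemma ninv_inv:
  assumes p: "p permutes Iset N"
  shows "ninv N (inv p) = ninv N p"
proof -
  have ip: "inv p permutes Iset N" using permutes_inv[OF p] .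
  have "bij_betw (\<lambda>(i,j). (p j, p i)) (invs N p) (invs N (inv p))"
  proof (rule bij_betw_byWitness[where f'="\<lambda>(x,y). (inv p y, inv p x)"])
    show "\<forall>a\<in>invs N p. (\<lambda>(x,y). (inv p y, inv p x)) ((\<lambda>(i,j). (p j, p i)) a) = a"
      by (auto simp: permutes_inverses[OF p])
    show "\<forall>a\<in>invs N (inv p). (\<lambda>(i,j). (p j, p i)) ((\<lambda>(x,y). (inv p y, inv p x)) a) = a"
      by (auto simp: permutes_inverses[OF p])
    show "(\<lambda>(i,j). (p j, p i)) ` invs N p \<subseteq> invs N (inv p)"
      using perm_Iset[OF p] by (auto simp: invs_def permutes_inverses[OF p])
    show "(\<lambda>(x,y). (inv p y, inv p x)) ` invs N (inv p) \<subseteq> invs N p"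
      using perm_Iset[OF ip] by (auto simp: invs_def permutes_inverses[OF p])
  qed
  thus ?thesis unfolding ninv_def by (metis bij_betw_same_card)
qed

lemma longest_invol:
  assumes K: "K \<subseteq> {1..N}"
  shows "longest N K \<circ> longest N K = id"
proof -
  let ?w = "longest N K"
  have w: "?w \<in> parab K" "\<forall>u\<in>parab K. coxlen N u \<le> coxlen N ?w" using longest_prop[OF K] by auto
  have wp: "?w permutes Iset N" using w(1) K by (auto simp: parab_char)
  have iw: "inv ?w \<in> parab K" using parab_inv[OF K w(1)] .
  have "coxlen N (inv ?w) = coxlen N ?w"
  proof -
    have "inv ?w \<in> Wgrp N" "?w \<in> Wgrp N" using parab_Wgrp[OF K] iw w(1) by auto
    thus ?thesis using coxlen_eq ninv_inv[OF wp] by simp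
  qed
  hence "longest N K = inv ?w" using longest_eq[OF K iw] w(2) by simp
  hence "?w \<circ> ?w = ?w \<circ> inv ?w" by (metis (no_types))
  thus ?thesis using permutes_inv_o(1)[OF wp] by simp
qed


lemma parab_support:
  assumes T: "\<forall>i\<in>K. i \<in> T \<and> Suc i \<in> T" and p: "p \<in> parab K"
  shows "(\<forall>x. x \<notin> T \<longrightarrow> p x = x) \<and> (\<forall>x\<in>T. p x \<in> T)"
proof -
  obtain ws where ws: "set ws \<subseteq> K" "p = word_prod ws" using p by (auto simp: parab_def)
  have "(\<forall>x. x \<notin> T \<longrightarrow> word_prod ws x = x) \<and> (\<forall>x\<in>T. word_prod ws x \<in> T)"
    using ws(1)
  proof (induction ws)
    case Nil thus ?case by simp
  next
    case (Cons i ws)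
    have iT: "i \<in> T" "Suc i \<in> T" using Cons.prems T by auto
    have s1: "\<And>x. x \<notin> T \<Longrightarrow> sref i x = x" using iT unfolding sref_def transpose_def by auto
    have s2: "\<And>x. x \<in> T \<Longrightarrow> sref i x \<in> T" using iT unfolding sref_def transpose_def by auto
    show ?case using Cons s1 s2 by auto
  qed
  thus ?thesis using ws by simp
qed

lemma commute_supp:
  assumes "\<forall>x. x \<notin> T \<longrightarrow> p x = x" "\<forall>x\<in>T. p x \<in> T" "\<forall>x\<in>T. q x = x" "\<forall>x. x \<notin> T \<longrightarrow> q x \<notin> T"
  shows "p \<circ> q = q \<circ> p"
proof
  fix x show "(p \<circ> q) x = (q \<circ> p) x"
    using assms by (cases "x \<in> T") auto
qed

lemma transp_char:
  assumes K: "K \<subseteq> {1..N}" and ji: "1 \<le> j" "j < i" "i \<le> Suc N"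
  shows "(transpose i j \<in> parab K) = (\<forall>k. j \<le> k \<and> k < i \<longrightarrow> k \<in> K)"
proof
  assume t: "transpose i j \<in> parab K"
  show "\<forall>k. j \<le> k \<and> k < i \<longrightarrow> k \<in> K"
  proof (intro allI impI, rule ccontr)
    fix k assume k: "j \<le> k \<and> k < i" "k \<notin> K"
    have "cutp k (transpose i j)" using parab_cutp[OF t k(2)] .
    hence "(transpose i j j \<le> k) = (j \<le> k)" unfolding cutp_def by blast
    thus False using k by simp
  qed
next
  assume iv: "\<forall>k. j \<le> k \<and> k < i \<longrightarrow> k \<in> K"
  have "transpose i j permutes Iset N" using ji by (intro permutes_swap_id) (auto simp: Iset_def)
  moreover have "\<forall>k\<in>{1..N}. k \<notin> K \<longrightarrow> cutp k (transpose i j)"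
  proof (intro ballI impI)
    fix k assume "k \<in> {1..N}" "k \<notin> K"
    have "k < j \<or> i \<le> k"
    proof (rule ccontr)
      assume "\<not> (k < j \<or> i \<le> k)"
      hence "j \<le> k \<and> k < i" by simp
      hence "k \<in> K" using iv by blast
      thus False using \<open>k \<notin> K\<close> by simp
    qed
    thus "cutp k (transpose i j)" unfolding cutp_def transpose_def using ji by auto
  qed
  ultimately show "transpose i j \<in> parab K" using parab_char[OF K] by auto
qed

locale sepset =
  fixes N a b :: nat and A :: "nat set"
  assumes a1: "1 \<le> a" and ab: "a \<le> b" and AN: "A \<subseteq> {1..N} - {a - 1..b + 1}"
begin

definition "S = {a..Suc b}"

lemma A_sub: "A \<subseteq> {1..N}" using AN by auto

lemma A_far: "x \<in> A \<Longrightarrow> x + 1 < a \<or> b + 1 < x"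
  using AN a1 by force

lemma suppJ: "J0 \<subseteq> {a..b} \<Longrightarrow> x \<in> parab J0 \<Longrightarrow> (\<forall>z. z \<notin> S \<longrightarrow> x z = z) \<and> (\<forall>z\<in>S. x z \<in> S)"
  by (rule parab_support) (auto simp: S_def)

lemma suppA: "y \<in> parab A \<Longrightarrow> (\<forall>z\<in>S. y z = z) \<and> (\<forall>z. z \<notin> S \<longrightarrow> y z \<notin> S)"
proof -
  assume y: "y \<in> parab A"
  have "\<forall>i\<in>A. i \<in> -S \<and> Suc i \<in> -S" using A_far by (force simp: S_def)
  from parab_support[OF this y] show ?thesis by auto
qed

lemma comm: "J0 \<subseteq> {a..b} \<Longrightarrow> x \<in> parab J0 \<Longrightarrow> y \<in> parab A \<Longrightarrow> x \<circ> y = y \<circ> x"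
  using suppJ suppA commute_supp[of S x y] by blast

lemma disj: "J0 \<subseteq> {a..b} \<Longrightarrow> J0 \<inter> A = {}"
  using A_far by fastforce

lemma decomp:
  assumes J0: "J0 \<subseteq> {a..b}" and p: "p \<in> parab (J0 \<union> A)"
  shows "\<exists>x\<in>parab J0. \<exists>y\<in>parab A. p = x \<circ> y"
proof -
  obtain ws where ws: "set ws \<subseteq> J0 \<union> A" "p = word_prod ws" using p by (auto simp: parab_def)
  have "word_prod ws = word_prod (filter (\<lambda>i. i \<in> J0) ws) \<circ> word_prod (filter (\<lambda>i. i \<notin> J0) ws)"
    using ws(1)
  proof (induction ws)
    case Nil thus ?case by simp
  next
    case (Cons i ws)
    show ?case
    proof (cases "i \<in> J0")
      case True
      have f1: "filter (\<lambda>i. i \<in> J0) (i#ws) = i # filter (\<lambda>i. i \<in> J0) ws" using True by simp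
      have f2: "filter (\<lambda>i. i \<notin> J0) (i#ws) = filter (\<lambda>i. i \<notin> J0) ws" using True by simp
      have "set ws \<subseteq> J0 \<union> A" using Cons.prems by simp
      from Cons.IH[OF this]
      have IH: "word_prod ws = word_prod (filter (\<lambda>i. i \<in> J0) ws) \<circ> word_prod (filter (\<lambda>i. i \<notin> J0) ws)" .
      show ?thesis unfolding f1 f2 word_prod_Cons by (simp only: IH comp_assoc)
    next
      case False
      hence "i \<in> A" using Cons by auto
      hence "sref i \<in> parab A" unfolding parab_def by (auto intro!: exI[of _ "[i]"])
      moreover have "word_prod (filter (\<lambda>i. i \<in> J0) ws) \<in> parab J0" unfolding parab_def by auto
      ultimately have c: "word_prod (filter (\<lambda>i. i \<in> J0) ws) \<circ> sref i = sref i \<circ> word_prod (filter (\<lambda>i. i \<in> J0) ws)"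
        using comm[OF J0] by blast
      let ?X = "word_prod (filter (\<lambda>i. i \<in> J0) ws)" and ?Y = "word_prod (filter (\<lambda>i. i \<notin> J0) ws)"
      have "set ws \<subseteq> J0 \<union> A" using Cons.prems by simp
      from Cons.IH[OF this] have IH: "word_prod ws = ?X \<circ> ?Y" .
      have "word_prod (i#ws) = sref i \<circ> (?X \<circ> ?Y)" using IH by simp
      also have "\<dots> = (sref i \<circ> ?X) \<circ> ?Y" by (simp only: comp_assoc)
      also have "\<dots> = (?X \<circ> sref i) \<circ> ?Y" using c by simp
      also have "\<dots> = ?X \<circ> (sref i \<circ> ?Y)" by (simp only: comp_assoc)
      finally show ?thesis using False by simp
    qed
  qed
  moreover have "word_prod (filter (\<lambda>i. i \<in> J0) ws) \<in> parab J0" unfolding parab_def by auto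
  moreover have "word_prod (filter (\<lambda>i. i \<notin> J0) ws) \<in> parab A"
  proof -
    have "set (filter (\<lambda>i. i \<notin> J0) ws) \<subseteq> A" using ws(1) by auto
    thus ?thesis unfolding parab_def by blast
  qed
  ultimately show ?thesis using ws(2) by blast
qed

lemma nomix:
  assumes c1: "cutp (a - 1) p" and c2: "cutp (Suc b) p" and ij: "(i,j) \<in> invs N p"
  shows "(i \<in> S) = (j \<in> S)"
proof -
  have ij': "i < j" "p j < p i" using ij by (auto simp: invs_def)
  show ?thesis
  proof (rule ccontr)
    assume "(i \<in> S) \<noteq> (j \<in> S)"
    then consider "i \<in> S" "j \<notin> S" | "i \<notin> S" "j \<in> S" by blast
    thus False
    proof cases
      case 1
      hence "i \<le> Suc b" "\<not> j \<le> Suc b" using ij' by (auto simp: S_def)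
      hence "p i \<le> Suc b" "\<not> p j \<le> Suc b" using c2 unfolding cutp_def by blast+
      thus False using ij' by auto
    next
      case 2
      hence "i \<le> a - 1" "\<not> j \<le> a - 1" using ij' a1 by (auto simp: S_def)
      hence "p i \<le> a - 1" "\<not> p j \<le> a - 1" using c1 unfolding cutp_def by blast+
      thus False using ij' by auto
    qed
  qed
qed

lemma gaps:
  assumes J0: "J0 \<subseteq> {a..b}"
  shows "a - 1 \<notin> J0 \<union> A" "Suc b \<notin> J0 \<union> A"
proof -
  have "a - 1 \<notin> J0"
  proof
    assume "a - 1 \<in> J0" hence "a \<le> a - 1" using J0 by auto
    thus False using a1 by simp
  qed
  moreover have "a - 1 \<notin> A" using AN ab by auto
  moreover have "Suc b \<notin> J0"
  proof
    assume "Suc b \<in> J0" hence "Suc b \<le> b" using J0 by auto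
    thus False by simp
  qed
  moreover have "Suc b \<notin> A" using AN ab by auto
  ultimately show "a - 1 \<notin> J0 \<union> A" "Suc b \<notin> J0 \<union> A" by auto
qed

lemma cuts:
  assumes J0: "J0 \<subseteq> {a..b}" and p: "p \<in> parab (J0 \<union> A)"
  shows "cutp (a - 1) p" "cutp (Suc b) p"
proof -
  have "a - 1 \<notin> J0"
  proof
    assume "a - 1 \<in> J0" hence "a \<le> a - 1" using J0 by auto
    thus False using a1 by simp
  qed
  moreover have "a - 1 \<notin> A" using AN ab by auto
  moreover have "Suc b \<notin> J0"
  proof
    assume "Suc b \<in> J0" hence "Suc b \<le> b" using J0 by auto
    thus False by simp
  qed
  moreover have "Suc b \<notin> A" using AN ab by auto
  ultimately have "a - 1 \<notin> J0 \<union> A" "Suc b \<notin> J0 \<union> A" by auto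
  thus "cutp (a - 1) p" "cutp (Suc b) p" using parab_cutp[OF p] by auto
qed

lemma addit:
  assumes J0: "J0 \<subseteq> {a..b}" and x: "x \<in> parab J0" and y: "y \<in> parab A"
  shows "ninv N (x \<circ> y) = ninv N x + ninv N y"
proof -
  have sx: "\<forall>z. z \<notin> S \<longrightarrow> x z = z" "\<forall>z\<in>S. x z \<in> S" using suppJ[OF J0 x] by auto
  have sy: "\<forall>z\<in>S. y z = z" "\<forall>z. z \<notin> S \<longrightarrow> y z \<notin> S" using suppA[OF y] by auto
  have xK: "x \<in> parab (J0 \<union> A)" and yK: "y \<in> parab (J0 \<union> A)" and xyK: "x \<circ> y \<in> parab (J0 \<union> A)"
    using x y parab_mono[of J0 "J0 \<union> A"] parab_mono[of A "J0 \<union> A"] parab_comp by blast+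
  have ix: "invs N x \<subseteq> S \<times> S"
  proof
    fix q assume q: "q \<in> invs N x"
    obtain i j where ij: "q = (i,j)" by (cases q)
    have "(i \<in> S) = (j \<in> S)" using nomix[OF cuts[OF J0 xK] q[unfolded ij]] .
    moreover have "i \<notin> S \<Longrightarrow> j \<notin> S \<Longrightarrow> False" using q ij sx by (auto simp: invs_def)
    ultimately show "q \<in> S \<times> S" using ij by auto
  qed
  have iy: "invs N y \<subseteq> (-S) \<times> (-S)"
  proof
    fix q assume q: "q \<in> invs N y"
    obtain i j where ij: "q = (i,j)" by (cases q)
    have "(i \<in> S) = (j \<in> S)" using nomix[OF cuts[OF J0 yK] q[unfolded ij]] .
    moreover have "i \<in> S \<Longrightarrow> j \<in> S \<Longrightarrow> False" using q ij sy by (auto simp: invs_def)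
    ultimately show "q \<in> (-S) \<times> (-S)" using ij by auto
  qed
  have un: "invs N (x \<circ> y) = invs N x \<union> invs N y"
  proof
    show "invs N (x \<circ> y) \<subseteq> invs N x \<union> invs N y"
    proof
      fix q assume q: "q \<in> invs N (x \<circ> y)"
      obtain i j where ij: "q = (i,j)" by (cases q)
      have "(i \<in> S) = (j \<in> S)" using nomix[OF cuts[OF J0 xyK] q[unfolded ij]] .
      thus "q \<in> invs N x \<union> invs N y"
        using q ij sx sy by (cases "i \<in> S") (auto simp: invs_def)
    qed
    show "invs N x \<union> invs N y \<subseteq> invs N (x \<circ> y)"
    proof
      fix q assume q: "q \<in> invs N x \<union> invs N y"
      obtain i j where ij: "q = (i,j)" by (cases q)
      show "q \<in> invs N (x \<circ> y)"
      proof (cases "q \<in> invs N x")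
        case True
        hence "i \<in> S" "j \<in> S" using ix ij by auto
        hence "y i = i" "y j = j" using sy(1) by auto
        thus ?thesis using True ij by (simp add: invs_def)
      next
        case False
        hence qy: "q \<in> invs N y" using q by simp
        hence "i \<notin> S" "j \<notin> S" using iy ij by auto
        hence "y i \<notin> S" "y j \<notin> S" using sy(2) by auto
        hence "x (y i) = y i" "x (y j) = y j" using sx(1) by auto
        thus ?thesis using qy ij by (simp add: invs_def)
      qed
    qed
  qed
  have "invs N x \<inter> invs N y = {}" using ix iy by blast
  thus ?thesis unfolding ninv_def un by (simp add: card_Un_disjoint finite_invs)
qed

lemma longest_split:
  assumes J0: "J0 \<subseteq> {a..b}" "J0 \<subseteq> {1..N}"
  shows "longest N (J0 \<union> A) = longest N J0 \<circ> longest N A"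
proof -
  have K: "J0 \<union> A \<subseteq> {1..N}" using J0 A_sub by auto
  let ?wJ = "longest N J0" and ?wA = "longest N A"
  have wJ: "?wJ \<in> parab J0" "\<forall>u\<in>parab J0. coxlen N u \<le> coxlen N ?wJ" using longest_prop[OF J0(2)] by auto
  have wA: "?wA \<in> parab A" "\<forall>u\<in>parab A. coxlen N u \<le> coxlen N ?wA" using longest_prop[OF A_sub] by auto
  have W: "\<And>u. u \<in> parab (J0 \<union> A) \<Longrightarrow> coxlen N u = ninv N u"
    using coxlen_eq parab_Wgrp[OF K] by blast
  have WJ: "\<And>u. u \<in> parab J0 \<Longrightarrow> coxlen N u = ninv N u"
    using coxlen_eq parab_Wgrp[OF J0(2)] by blast
  have WA: "\<And>u. u \<in> parab A \<Longrightarrow> coxlen N u = ninv N u"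
    using coxlen_eq parab_Wgrp[OF A_sub] by blast
  have wK: "?wJ \<circ> ?wA \<in> parab (J0 \<union> A)"
    using wJ(1) wA(1) parab_mono[of J0 "J0 \<union> A"] parab_mono[of A "J0 \<union> A"] parab_comp by blast
  show ?thesis
  proof (rule longest_eq[OF K wK], intro ballI)
    fix u assume u: "u \<in> parab (J0 \<union> A)"
    obtain x y where xy: "x \<in> parab J0" "y \<in> parab A" "u = x \<circ> y" using decomp[OF J0(1) u] by auto
    have "coxlen N u = ninv N x + ninv N y" using W[OF u] addit[OF J0(1) xy(1,2)] xy(3) by simp
    also have "\<dots> \<le> ninv N ?wJ + ninv N ?wA"
      using wJ(2) xy(1) wA(2) xy(2) WJ WA wJ(1) wA(1) by (metis add_mono)
    also have "\<dots> = coxlen N (?wJ \<circ> ?wA)" using W[OF wK] addit[OF J0(1) wJ(1) wA(1)] by simp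
    finally show "coxlen N u \<le> coxlen N (?wJ \<circ> ?wA)" .
  qed
qed

lemma longest_prod:
  assumes J: "J' \<subseteq> J" "J \<subseteq> {a..b}" "J \<subseteq> {1..N}"
  shows "longest N (J \<union> A) \<circ> longest N (J' \<union> A) = longest N J \<circ> longest N J'"
proof -
  have J': "J' \<subseteq> {a..b}" "J' \<subseteq> {1..N}" using J by auto
  let ?wJ = "longest N J" and ?wJ' = "longest N J'" and ?wA = "longest N A"
  have c: "?wJ' \<circ> ?wA = ?wA \<circ> ?wJ'"
    using comm[OF J'(1) conjunct1[OF longest_prop[OF J'(2)]] conjunct1[OF longest_prop[OF A_sub]]] .
  have "longest N (J \<union> A) \<circ> longest N (J' \<union> A) = ?wJ \<circ> (?wA \<circ> ?wJ') \<circ> ?wA"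
    unfolding longest_split[OF J(2,3)] longest_split[OF J'] by (simp only: comp_assoc)
  also have "\<dots> = ?wJ \<circ> (?wJ' \<circ> ?wA) \<circ> ?wA" by (simp only: c)
  also have "\<dots> = ?wJ \<circ> ?wJ' \<circ> (?wA \<circ> ?wA)" by (simp only: comp_assoc)
  also have "\<dots> = ?wJ \<circ> ?wJ'" using longest_invol[OF A_sub] by simp
  finally show ?thesis .
qed

lemma minreps_eq:
  assumes J: "J' \<subseteq> J" "J \<subseteq> {a..b}" "J \<subseteq> {1..N}"
  shows "parab (J \<union> A) \<inter> minreps N (J' \<union> A) = parab J \<inter> minreps N J'"
proof -
  have J': "J' \<subseteq> {a..b}" "J' \<subseteq> {1..N}" using J by auto
  have K: "J \<union> A \<subseteq> {1..N}" using J A_sub by auto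
  have W: "\<And>u. u \<in> parab (J \<union> A) \<Longrightarrow> coxlen N u = ninv N u"
    using coxlen_eq parab_Wgrp[OF K] by blast
  have WJ: "\<And>u. u \<in> parab J \<Longrightarrow> coxlen N u = ninv N u"
    using coxlen_eq parab_Wgrp[OF J(3)] by blast
  have mJ: "parab J \<subseteq> parab (J \<union> A)" "parab A \<subseteq> parab (J \<union> A)" "parab J' \<subseteq> parab J"
    "parab A \<subseteq> parab (J' \<union> A)" "parab J' \<subseteq> parab (J' \<union> A)"
    using parab_mono J(1) by auto
  show ?thesis
  proof
    show "parab (J \<union> A) \<inter> minreps N (J' \<union> A) \<subseteq> parab J \<inter> minreps N J'"
    proof
      fix v assume v: "v \<in> parab (J \<union> A) \<inter> minreps N (J' \<union> A)"
      obtain x y where xy: "x \<in> parab J" "y \<in> parab A" "v = x \<circ> y" using decomp[OF J(2)] v by blast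
      have yp: "y permutes Iset N" using xy(2) A_sub by (auto simp: parab_char)
      have iy: "inv y \<in> parab (J' \<union> A)" using parab_inv[OF A_sub xy(2)] mJ by auto
      have "coxlen N v \<le> coxlen N (v \<circ> inv y)" using v iy by (auto simp: minreps_def)
      moreover have "v \<circ> inv y = x" using xy(3) permutes_inv_o(1)[OF yp] by (simp add: comp_assoc)
      ultimately have "ninv N x + ninv N y \<le> ninv N x"
        using W[of v] WJ[OF xy(1)] v addit[OF J(2) xy(1,2)] xy(3) by auto
      hence "y = id" using ninv0[OF yp] by simp
      hence vx: "v = x" using xy(3) by simp
      show "v \<in> parab J \<inter> minreps N J'" using v vx xy(1) mJ by (auto simp: minreps_def)
    qed
    show "parab J \<inter> minreps N J' \<subseteq> parab (J \<union> A) \<inter> minreps N (J' \<union> A)"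
    proof
      fix v assume v: "v \<in> parab J \<inter> minreps N J'"
      have "\<forall>u\<in>parab (J' \<union> A). coxlen N v \<le> coxlen N (v \<circ> u)"
      proof
        fix u assume u: "u \<in> parab (J' \<union> A)"
        obtain x y where xy: "x \<in> parab J'" "y \<in> parab A" "u = x \<circ> y" using decomp[OF J'(1) u] by blast
        have vx: "v \<circ> x \<in> parab J" using v xy(1) mJ parab_comp by blast
        have "coxlen N v \<le> coxlen N (v \<circ> x)" using v xy(1) by (auto simp: minreps_def)
        also have "\<dots> = ninv N (v \<circ> x)" using WJ[OF vx] .
        also have "\<dots> \<le> ninv N ((v \<circ> x) \<circ> y)" using addit[OF J(2) vx xy(2)] by simp
        also have "\<dots> = coxlen N (v \<circ> u)"
        proof -
          have vxy: "(v \<circ> x) \<circ> y \<in> parab (J \<union> A)"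
            using parab_comp[OF subsetD[OF mJ(1) vx] subsetD[OF mJ(2) xy(2)]] .
          have "(v \<circ> x) \<circ> y = v \<circ> u" using xy(3) by (simp add: comp_assoc)
          thus ?thesis using W[OF vxy] by simp
        qed
        finally show "coxlen N v \<le> coxlen N (v \<circ> u)" .
      qed
      thus "v \<in> parab (J \<union> A) \<inter> minreps N (J' \<union> A)" using v mJ by (auto simp: minreps_def)
    qed
  qed
qed

lemma iv_split:
  assumes J0: "J0 \<subseteq> {a..b}" and iv: "\<forall>k. j \<le> k \<and> k < i \<longrightarrow> k \<in> J0 \<union> A"
  shows "(\<forall>k. j \<le> k \<and> k < i \<longrightarrow> k \<in> J0) \<or> (\<forall>k. j \<le> k \<and> k < i \<longrightarrow> k \<in> A)"
proof (rule ccontr)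
  assume "\<not> ?thesis"
  then obtain x y where x: "j \<le> x" "x < i" "x \<notin> J0" and y: "j \<le> y" "y < i" "y \<notin> A" by blast
  have xA: "x \<in> A" and yJ: "y \<in> J0" using x y iv by auto
  have yab: "a \<le> y" "y \<le> b" using yJ J0 by auto
  have "x + 1 < a \<or> b + 1 < x" using A_far[OF xA] .
  then consider "x + 1 < a" | "b + 1 < x" by blast
  thus False
  proof cases
    case 1
    hence "j \<le> a - 1 \<and> a - 1 < i" using x y yab by auto
    hence "a - 1 \<in> J0 \<union> A" using iv by blast
    thus False using gaps[OF J0] by simp
  next
    case 2
    hence "j \<le> Suc b \<and> Suc b < i" using x y yab by auto
    hence "Suc b \<in> J0 \<union> A" using iv by blast
    thus False using gaps[OF J0] by simp
  qed
qed

lemma negroots_eq: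
  assumes J: "J' \<subseteq> J" "J \<subseteq> {a..b}" "J \<subseteq> {1..N}"
  shows "negroots N (J \<union> A) - negroots N (J' \<union> A) = negroots N J - negroots N J'"
proof -
  have J': "J' \<subseteq> {a..b}" "J' \<subseteq> {1..N}" using J by auto
  have K: "J \<union> A \<subseteq> {1..N}" "J' \<union> A \<subseteq> {1..N}" using J J' A_sub by auto
  have dJ: "J \<inter> A = {}" using disj[OF J(2)] .
  have key: "\<And>i j. 1 \<le> j \<Longrightarrow> j < i \<Longrightarrow> i \<le> Suc N \<Longrightarrow>
     ((\<forall>k. j \<le> k \<and> k < i \<longrightarrow> k \<in> J \<union> A) \<and> \<not> (\<forall>k. j \<le> k \<and> k < i \<longrightarrow> k \<in> J' \<union> A))
     = ((\<forall>k. j \<le> k \<and> k < i \<longrightarrow> k \<in> J) \<and> \<not> (\<forall>k. j \<le> k \<and> k < i \<longrightarrow> k \<in> J'))"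
  proof -
    fix i j :: nat assume ji: "1 \<le> j" "j < i" "i \<le> Suc N"
    show "?thesis i j"
    proof (cases "\<forall>k. j \<le> k \<and> k < i \<longrightarrow> k \<in> J \<union> A")
      case True
      from iv_split[OF J(2) True] show ?thesis
      proof
        assume aJ: "\<forall>k. j \<le> k \<and> k < i \<longrightarrow> k \<in> J"
        hence "\<forall>k. j \<le> k \<and> k < i \<longrightarrow> k \<notin> A" using dJ by blast
        thus ?thesis using aJ by blast
      next
        assume aA: "\<forall>k. j \<le> k \<and> k < i \<longrightarrow> k \<in> A"
        hence "j \<in> A" using ji by auto
        hence "j \<notin> J" using dJ by auto
        thus ?thesis using aA ji by blast
      qed
    next
      case False thus ?thesis by blast
    qed
  qed
  show ?thesis
  proof (rule set_eqI)
    fix q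
    obtain i j :: nat where q: "q = (i,j)" by (cases q)
    have mem: "\<And>K. ((i,j) \<in> negroots N K) = (1 \<le> j \<and> j < i \<and> i \<le> Suc N \<and> transpose i j \<in> parab K)"
      by (simp add: negroots_def)
    show "q \<in> negroots N (J \<union> A) - negroots N (J' \<union> A) \<longleftrightarrow> q \<in> negroots N J - negroots N J'"
    proof (cases "1 \<le> j \<and> j < i \<and> i \<le> Suc N")
      case True
      hence tj: "1 \<le> j" "j < i" "i \<le> Suc N" by auto
      have "(q \<in> negroots N (J \<union> A) - negroots N (J' \<union> A))
          = (transpose i j \<in> parab (J \<union> A) \<and> \<not> transpose i j \<in> parab (J' \<union> A))"
        unfolding q Diff_iff mem using True by blast
      also have "\<dots> = ((\<forall>k. j \<le> k \<and> k < i \<longrightarrow> k \<in> J \<union> A) \<and> \<not> (\<forall>k. j \<le> k \<and> k < i \<longrightarrow> k \<in> J' \<union> A))"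
        by (simp only: transp_char[OF K(1) tj] transp_char[OF K(2) tj])
      also have "\<dots> = ((\<forall>k. j \<le> k \<and> k < i \<longrightarrow> k \<in> J) \<and> \<not> (\<forall>k. j \<le> k \<and> k < i \<longrightarrow> k \<in> J'))"
        by (rule key[OF tj])
      also have "\<dots> = (transpose i j \<in> parab J \<and> \<not> transpose i j \<in> parab J')"
        by (simp only: transp_char[OF J(3) tj] transp_char[OF J'(2) tj])
      also have "\<dots> = (q \<in> negroots N J - negroots N J')"
        unfolding q Diff_iff mem using True by blast
      finally show ?thesis .
    next
      case False
      thus ?thesis unfolding q Diff_iff mem by blast
    qed
  qed
qed

end

lemma minreps_KK:
  assumes K: "K \<subseteq> {1..N}"
  shows "parab K \<inter> minreps N K = {id}"
proof
  have cid: "coxlen N id = 0"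
  proof -
    have "id \<in> Wgrp N" by (simp add: Wgrp_def permutes_id)
    thus ?thesis using coxlen_eq ninv_id by simp
  qed
  show "parab K \<inter> minreps N K \<subseteq> {id}"
  proof
    fix v assume v: "v \<in> parab K \<inter> minreps N K"
    have vp: "v permutes Iset N" using v K by (auto simp: parab_char)
    have "inv v \<in> parab K" using parab_inv[OF K] v by simp
    hence "coxlen N v \<le> coxlen N (v \<circ> inv v)" using v by (auto simp: minreps_def)
    hence "coxlen N v = 0" using permutes_inv_o(1)[OF vp] cid by simp
    moreover have "v \<in> Wgrp N" using vp by (simp add: Wgrp_def)
    ultimately have "ninv N v = 0" using coxlen_eq by simp
    thus "v \<in> {id}" using ninv0[OF vp] by simp
  qed
  show "{id} \<subseteq> parab K \<inter> minreps N K"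
    using parab_id cid by (auto simp: minreps_def Wgrp_def permutes_id)
qed

lemma gamma_KK:
  assumes K: "K \<subseteq> {1..N}"
  shows "gamma N act em t K K = gamma N act em t {} {}"
  unfolding gamma_def minreps_KK[OF K] minreps_KK[of "{}" N, simplified]
    longest_invol[OF K] longest_invol[of "{}" N, simplified] ..

lemma Yop_KK:
  assumes K: "K \<subseteq> {1..N}"
  shows "Yop N act xh K K = Yop N act xh {} {}"
  unfolding Yop_def xquot_def minreps_KK[OF K] minreps_KK[of "{}" N, simplified] by simp

theorem lemma6p5:
  fixes N a b :: nat and J J' A :: "nat set"
    and actm :: "(nat \<Rightarrow> nat) \<Rightarrow> 'm::field \<Rightarrow> 'm" and em :: "nat \<Rightarrow> nat \<Rightarrow> 'm" and tm :: 'm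
    and actt :: "(nat \<Rightarrow> nat) \<Rightarrow> 'h::field \<Rightarrow> 'h" and xh :: "nat \<Rightarrow> nat \<Rightarrow> 'h" and th :: 'h
  assumes "1 \<le> N"
    and "J' \<subseteq> J" and "J \<subseteq> {1..N}"
    and "a \<in> {1..N}" and "b \<in> {1..N}" and "J \<subseteq> {a..b}"
    and "A \<subseteq> {1..N} - {a - 1..b + 1}"
    and "mult_setting N actm em tm"
    and "hyp_setting N actt xh th"
  shows "gamma N actm em tm J J' = gamma N actm em tm (J \<union> A) (J' \<union> A)
       \<and> Yop N actt xh J J' = Yop N actt xh (J \<union> A) (J' \<union> A)"
proof (cases "J = {}")
  case True
  hence J': "J' = {}" using assms(2) by auto
  have A: "A \<subseteq> {1..N}" using assms(7) by auto
  have g: "gamma N actm em tm A A = gamma N actm em tm {} {}" by (rule gamma_KK[OF A])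
  have y: "Yop N actt xh A A = Yop N actt xh {} {}" by (rule Yop_KK[OF A])
  show ?thesis using True J' g y by simp
next
  case False
  hence ab: "a \<le> b" using assms(6) by auto
  interpret sepset N a b A using assms(4,7) ab by unfold_locales auto
  have m: "parab (J \<union> A) \<inter> minreps N (J' \<union> A) = parab J \<inter> minreps N J'"
    using minreps_eq[OF assms(2,6,3)] .
  have l: "longest N (J \<union> A) \<circ> longest N (J' \<union> A) = longest N J \<circ> longest N J'"
    using longest_prod[OF assms(2,6,3)] .
  have n: "negroots N (J \<union> A) - negroots N (J' \<union> A) = negroots N J - negroots N J'"
    using negroots_eq[OF assms(2,6,3)] .
  show ?thesis unfolding gamma_def Yop_def xquot_def m l n by simp
qed

end
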